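(* Let $R>0$ and let $f\colon\mathbb{R}\to(0,\infty)$ be a twice continuously differentiable convex function with $t^2+f(t)^2>R^2$ for all $t$. Let $\alpha(t)=\dfrac{tf'(t)-f(t)}{\sqrt{1+f'(t)^2}}$ and $D=\{t\in\mathbb{R}\mid\alpha(t)<R\}$. Then the function $x\colon D\to\mathbb{R}$, $$x(t)=t+\frac{f'(t)}{2\sqrt{1+f'(t)^2}}\cdot\frac{t^2+f(t)^2-R^2}{R-\alpha(t)},$$ is a bijection from $D$ onto $\mathbb{R}$ and $x'(t)\ne0$ for all $t\in D$.
   Context: Geometrically, with $K$ the closed disk of radius $R$ centered at the origin and $L$ the epigraph of $f$, $(x(t),y(t))$ with $y(t)=f(t)-\frac{1}{2\sqrt{1+f'(t)^2}}\cdot\frac{t^2+f(t)^2-R^2}{R-\alpha(t)}$ is the point equidistant from $K$ and $L$ whose nearest point in $L$ is $(t,f(t))$. *)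

theory Defs
  imports "HOL-Analysis.Analysis"
begin

definition alpha_fn :: "(real \<Rightarrow> real) \<Rightarrow> real \<Rightarrow> real" where
  "alpha_fn f t = (t * deriv f t - f t) / sqrt (1 + (deriv f t)\<^sup>2)"

definition x_fn :: "real \<Rightarrow> (real \<Rightarrow> real) \<Rightarrow> real \<Rightarrow> real" where
  "x_fn R f t = t + deriv f t / (2 * sqrt (1 + (deriv f t)\<^sup>2))
                 * ((t\<^sup>2 + (f t)\<^sup>2 - R\<^sup>2) / (R - alpha_fn f t))"

end

theory Submission
  imports Defs
begin

lemma ident:
  fixes k s N g u w R fs :: real
  assumes "g > 0" "s > 0" "R + fs = g + w * u / s"
  shows "1 + (k / (2 * s^3)) * (N / g) + (u / (2 * s)) * ((2 * w * g - N * (0 - k * w / s^3)) / (g * g))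
      = (1 + N * k / (2 * g * s^3)) * (R + fs) / g"
proof -
  have "1 + (k / (2 * s^3)) * (N / g) + (u / (2 * s)) * ((2 * w * g - N * (0 - k * w / s^3)) / (g * g))
     = (1 + N * k / (2 * g * s^3)) * (1 + w * u / (s * g))"
    using assms by (simp add: field_simps)
  also have "1 + w * u / (s * g) = (R + fs) / g" using assms by (simp add: field_simps)
  finally show ?thesis by simp
qed

lemma incr_helper:
  fixes h h' :: "real \<Rightarrow> real"
  assumes "\<And>x. (h has_real_derivative h' x) (at x)" "a \<le> b" "\<And>x. a \<le> x \<Longrightarrow> x \<le> b \<Longrightarrow> h' x \<ge> 0"
  shows "h a \<le> h b"
proof (rule DERIV_nonneg_imp_increasing_open[where f=h])
  fix x assume "a < x" "x < b"
  then show "\<exists>y. (h has_real_derivative y) (at x) \<and> 0 \<le> y"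
    using assms by (intro exI[of _ "h' x"]) auto
qed (use assms in \<open>auto intro!: continuous_at_imp_continuous_on DERIV_isCont\<close>)

lemma decr_helper:
  fixes h h' :: "real \<Rightarrow> real"
  assumes "\<And>x. (h has_real_derivative h' x) (at x)" "a \<le> b" "\<And>x. a \<le> x \<Longrightarrow> x \<le> b \<Longrightarrow> h' x \<le> 0"
  shows "h a \<ge> h b"
proof (rule DERIV_nonpos_imp_decreasing_open[where f=h])
  fix x assume "a < x" "x < b"
  then show "\<exists>y. (h has_real_derivative y) (at x) \<and> y \<le> 0"
    using assms by (intro exI[of _ "h' x"]) auto
qed (use assms in \<open>auto intro!: continuous_at_imp_continuous_on DERIV_isCont\<close>)

lemma isCont_left: "isCont h b \<Longrightarrow> (h \<longlongrightarrow> h b) (at_left (b::real))"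
  unfolding isCont_def by (rule tendsto_mono[OF at_le[OF subset_UNIV]])

locale thmctx =
  fixes R :: real and f u k :: "real \<Rightarrow> real"
  assumes R: "R > 0" and fpos: "\<And>t. f t > 0"
    and fd: "\<And>t. (f has_real_derivative u t) (at t)"
    and ud: "\<And>t. (u has_real_derivative k t) (at t)"
    and kpos: "\<And>t. k t \<ge> 0"
    and big: "\<And>t. t\<^sup>2 + (f t)\<^sup>2 > R\<^sup>2"
begin

definition "s t = sqrt (1 + (u t)\<^sup>2)"
definition "A t = (t * u t - f t) / s t"
definition "N t = t\<^sup>2 + (f t)\<^sup>2 - R\<^sup>2"
definition "X t = t + u t / (2 * s t) * (N t / (R - A t))"
definition "w t = t + f t * u t"

lemma s_pos: "s t > 0" unfolding s_def by (simp add: add_pos_nonneg)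
lemma s_sq: "(s t)\<^sup>2 = 1 + (u t)\<^sup>2" unfolding s_def by simp
lemma N_pos: "N t > 0" using big[of t] unfolding N_def by simp

lemma s_deriv: "(s has_real_derivative (u t * k t / s t)) (at t)"
proof -
  have 1: "((\<lambda>t. 1 + (u t)\<^sup>2) has_real_derivative 2 * u t * k t) (at t)"
    by (auto intro!: derivative_eq_intros ud)
  have "((\<lambda>t. sqrt (1 + (u t)\<^sup>2)) has_real_derivative inverse (sqrt (1 + (u t)\<^sup>2)) / 2 * (2 * u t * k t)) (at t)"
    by (rule DERIV_chain2[OF DERIV_real_sqrt 1]) (simp add: add_pos_nonneg)
  then show ?thesis unfolding s_def[abs_def] by (simp add: field_simps)
qed

lemma A_deriv: "(A has_real_derivative (k t * w t / (s t)^3)) (at t)"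
  unfolding A_def[abs_def]
  apply (rule derivative_eq_intros fd ud s_deriv refl | simp add: s_pos less_imp_neq[symmetric])+
  using s_pos[of t] s_sq[of t] unfolding w_def
  apply (simp add: field_simps power2_eq_square power3_eq_cube)
  done

lemma N_deriv: "(N has_real_derivative 2 * w t) (at t)"
  unfolding N_def[abs_def] w_def
  by (auto intro!: derivative_eq_intros fd simp: algebra_simps)

lemma w_deriv: "(w has_real_derivative 1 + (u t)\<^sup>2 + f t * k t) (at t)"
  unfolding w_def[abs_def]
  by (auto intro!: derivative_eq_intros fd ud simp: algebra_simps power2_eq_square)

lemma w_deriv_pos: "1 + (u t)\<^sup>2 + f t * k t > 0"
  using fpos[of t] kpos[of t] by (simp add: add_pos_nonneg)

lemma w_mono: "a < b \<Longrightarrow> w a < w b"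
  by (rule DERIV_pos_imp_increasing[where f=w]) (use w_deriv w_deriv_pos in blast)+

lemma u_mono: "a \<le> b \<Longrightarrow> u a \<le> u b"
  by (rule DERIV_nonneg_imp_increasing_open[where f=u])
     (use ud kpos in \<open>auto intro!: continuous_at_imp_continuous_on DERIV_isCont\<close>)

lemma A_cont: "isCont A t" using A_deriv by (rule DERIV_isCont)

lemma P_deriv: "((\<lambda>t. u t / (2 * s t)) has_real_derivative k t / (2 * (s t)^3)) (at t)"
proof -
  have "((\<lambda>t. u t / (2 * s t)) has_real_derivative
     (k t * (2 * s t) - u t * (2 * (u t * k t / s t))) / ((2 * s t) * (2 * s t))) (at t)"
    by (rule DERIV_divide[OF ud DERIV_cmult[OF s_deriv]]) (use s_pos[of t] in simp)
  moreover have "(k t * (2 * s t) - u t * (2 * (u t * k t / s t))) / ((2 * s t) * (2 * s t))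
      = k t / (2 * (s t)^3)"
  proof -
    have u2: "u t * u t = s t * s t - 1" using s_sq[of t] by (simp add: power2_eq_square)
    have "k t * (2 * s t) - u t * (2 * (u t * k t / s t)) = 2 * k t * (s t * s t - u t * u t) / s t"
      using s_pos[of t] by (simp add: field_simps)
    also have "\<dots> = 2 * k t / s t" unfolding u2 by simp
    finally show ?thesis using s_pos[of t] by (simp add: field_simps power3_eq_cube)
  qed
  ultimately show ?thesis by simp
qed

lemma X_deriv:
  assumes "A t < R"
  shows "(X has_real_derivative
     (1 + N t * k t / (2 * (R - A t) * (s t)^3)) * (R + f t * s t) / (R - A t)) (at t)"
proof -
  have g: "R - A t > 0" using assms by simp
  have "(X has_real_derivative 1 + (k t / (2 * (s t)^3)) * (N t / (R - A t))
      + (u t / (2 * s t)) * ((2 * w t * (R - A t) - N t * (0 - k t * w t / (s t)^3)) / ((R - A t) * (R - A t)))) (at t)"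
  proof -
    have Q: "((\<lambda>t. N t / (R - A t)) has_real_derivative
        (2 * w t * (R - A t) - N t * (0 - k t * w t / (s t)^3)) / ((R - A t) * (R - A t))) (at t)"
      by (rule DERIV_divide[OF N_deriv DERIV_diff[OF DERIV_const A_deriv]]) (use g in simp)
    have "(X has_real_derivative 1 + ((k t / (2 * (s t)^3)) * (N t / (R - A t))
      + ((2 * w t * (R - A t) - N t * (0 - k t * w t / (s t)^3)) / ((R - A t) * (R - A t))) * (u t / (2 * s t)))) (at t)"
      unfolding X_def[abs_def] by (rule DERIV_add[OF DERIV_ident DERIV_mult[OF P_deriv Q]])
    then show ?thesis by (simp add: algebra_simps)
  qed
  moreover have e: "R + f t * s t = (R - A t) + w t * u t / s t"
  proof -
    have "f t * s t = f t * (s t)\<^sup>2 / s t" using s_pos[of t] by (simp add: power2_eq_square)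
    also have "\<dots> = f t * (1 + (u t)\<^sup>2) / s t" by (simp add: s_sq)
    finally show ?thesis unfolding A_def w_def using s_pos[of t]
      by (simp add: diff_divide_distrib add_divide_distrib power2_eq_square algebra_simps)
  qed
  ultimately show ?thesis using ident[OF g s_pos e] by simp
qed

lemma X_deriv_pos:
  assumes "A t < R"
  shows "(1 + N t * k t / (2 * (R - A t) * (s t)^3)) * (R + f t * s t) / (R - A t) > 0"
proof -
  have g: "R - A t > 0" using assms by simp
  have "N t * k t / (2 * (R - A t) * (s t)^3) \<ge> 0"
    using N_pos[of t] kpos[of t] g s_pos[of t] by simp
  moreover have "R + f t * s t > 0" using R fpos[of t] s_pos[of t] by (simp add: add_pos_pos)
  ultimately show ?thesis using g by simp
qed

lemma A_interval:
  assumes "a < b" "b < c" "A a < R" "A c < R"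
  shows "A b < R"
proof (rule ccontr)
  assume nb: "\<not> A b < R"
  show False
  proof (cases "w b \<ge> 0")
    case True
    have "A b \<le> A c"
    proof (rule incr_helper[OF A_deriv])
      fix x assume "b \<le> x" "x \<le> c"
      then have "w x \<ge> 0" using True w_mono[of b x] by (cases "b = x") auto
      then show "k x * w x / (s x)^3 \<ge> 0" using kpos[of x] s_pos[of x] by simp
    qed (use assms in simp)
    then show False using nb assms by simp
  next
    case False
    have "A a \<ge> A b"
    proof (rule decr_helper[OF A_deriv])
      fix x assume "a \<le> x" "x \<le> b"
      then have "w x \<le> 0" using False w_mono[of x b] by (cases "b = x") auto
      then show "k x * w x / (s x)^3 \<le> 0" using kpos[of x] s_pos[of x]
        by (simp add: divide_nonpos_pos mult_nonneg_nonpos)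
    qed (use assms in simp)
    then show False using nb assms by simp
  qed
qed

lemma A0: "A 0 < R"
proof -
  have "f 0 / s 0 > 0" using fpos[of 0] s_pos[of 0] by simp
  moreover have "A 0 = - (f 0 / s 0)" unfolding A_def by simp
  ultimately show ?thesis using R by linarith
qed

lemma X_bound:
  assumes "A t < R" "t > 0"
  shows "X t > t - N t / (2 * t)"
proof -
  have g: "R - A t > 0" using assms by simp
  have sg: "s t * (R - A t) = R * s t - t * u t + f t"
    unfolding A_def using s_pos[of t] by (simp add: field_simps)
  have "u t / (2 * s t) * (N t / (R - A t)) + N t / (2 * t)
      = N t * (t * u t + s t * (R - A t)) / (2 * t * (s t * (R - A t)))"
    using g s_pos[of t] assms(2) by (simp add: field_simps)
  also have "\<dots> > 0"
  proof -
    have "t * u t + s t * (R - A t) > 0" unfolding sg using R fpos[of t] s_pos[of t] by (simp add: add_pos_pos)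
    then show ?thesis using N_pos[of t] g s_pos[of t] assms(2) by simp
  qed
  finally show ?thesis unfolding X_def by simp
qed

lemma X_ge_t:
  assumes "A t < R" "u t \<ge> 0"
  shows "X t \<ge> t"
proof -
  have "u t / (2 * s t) * (N t / (R - A t)) \<ge> 0"
    using assms N_pos[of t] s_pos[of t] by simp
  then show ?thesis unfolding X_def by simp
qed

lemma A_cont_on: "continuous_on T A"
  by (intro continuous_at_imp_continuous_on ballI A_cont)

lemma upper: "\<exists>t. A t < R \<and> X t \<ge> y"
proof (cases "\<forall>t\<ge>0. A t < R")
  case allD: True
  show ?thesis
  proof (cases "\<exists>c\<ge>0. u c \<ge> 0")
    case True
    then obtain c where c: "c \<ge> 0" "u c \<ge> 0" by blast
    let ?t = "max c y"
    have "A ?t < R" using allD c by simp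
    moreover have "u ?t \<ge> 0" using u_mono[of c ?t] c by simp
    ultimately show ?thesis using X_ge_t[of ?t] by (intro exI[of _ ?t]) auto
  next
    case False
    then have un: "\<And>t. t \<ge> 0 \<Longrightarrow> u t < 0" by auto
    have fb: "f t \<le> f 0" if "t \<ge> 0" for t
      by (rule decr_helper[OF fd that]) (use un in \<open>auto intro: less_imp_le\<close>)
    define t where "t = 2 * \<bar>y\<bar> + f 0 + 1"
    have t0: "t > 0" "t \<ge> f 0 + 1" "f 0 > 0" using fpos[of 0] unfolding t_def by auto
    have Xb: "X t > t - N t / (2 * t)" using X_bound[of t] allD t0 by simp
    have "f t \<le> f 0" using fb t0 by simp
    then have "(f t)\<^sup>2 \<le> (f 0)\<^sup>2" using fpos[of t] by (simp add: power_mono)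
    also have "(f 0)\<^sup>2 \<le> t * f 0" using t0 by (simp add: power2_eq_square)
    finally have "N t \<le> t * (t + f 0)" unfolding N_def using zero_le_square[of R]
      by (simp add: algebra_simps power2_eq_square) (smt (verit) zero_le_square)
    then have "N t / (2 * t) \<le> (t + f 0) / 2" using t0 by (simp add: pos_divide_le_eq mult.commute)
    moreover have "t - (t + f 0) / 2 = (t - f 0) / 2" by (simp add: field_simps)
    moreover have "t - f 0 = 2 * \<bar>y\<bar> + 1" unfolding t_def by simp
    moreover have "\<bar>y\<bar> \<ge> y" by (rule abs_ge_self)
    ultimately have "X t \<ge> y" using Xb by argo
    moreover have "A t < R" using allD t0(1) by simp
    ultimately show ?thesis by blast
  qed
next
  case False
  then obtain t0 where t0': "t0 \<ge> 0" "\<not> A t0 < R" by blast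
  then have t0: "t0 \<ge> 0" "A t0 \<ge> R" by simp_all
  define S where "S = {0..t0} \<inter> {t. A t = R}"
  have "S \<noteq> {}"
  proof -
    obtain x where "0 \<le> x" "x \<le> t0" "A x = R"
      using IVT'[of A 0 R t0, OF less_imp_le[OF A0] t0(2) t0(1) A_cont_on] by blast
    then have "x \<in> S" unfolding S_def by simp
    then show ?thesis by blast
  qed
  moreover have "compact S" unfolding S_def
    by (rule compact_Int_closed[OF compact_Icc closed_Collect_eq[OF A_cont_on continuous_on_const]])
  ultimately obtain b where b: "b \<in> S" "\<And>t. t \<in> S \<Longrightarrow> b \<le> t"
    using compact_attains_inf[of S] by metis
  have Ab: "A b = R" "0 \<le> b" "b \<le> t0" using b(1) unfolding S_def by auto
  have b0: "b > 0" using Ab A0 by (cases "b = 0") auto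
  have left: "A t < R" if t: "0 \<le> t" "t < b" for t
  proof (rule ccontr)
    assume "\<not> A t < R"
    then obtain x where x: "0 \<le> x" "x \<le> t" "A x = R"
      using IVT'[of A 0 R t, OF less_imp_le[OF A0] _ t(1) A_cont_on] by force
    then have "x \<in> S" using t Ab unfolding S_def by auto
    then show False using b(2)[OF \<open>x \<in> S\<close>] x(2) t(2) by linarith
  qed
  have wb: "w b > 0"
  proof (rule ccontr)
    assume nw: "\<not> w b > 0"
    have "A 0 \<ge> A b"
    proof (rule decr_helper[OF A_deriv])
      fix x assume "0 \<le> x" "x \<le> b"
      then have "w x \<le> 0" using nw w_mono[of x b] by (cases "b = x") auto
      then show "k x * w x / (s x)^3 \<le> 0" using kpos[of x] s_pos[of x]
        by (simp add: divide_nonpos_pos mult_nonneg_nonpos)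
    qed (use Ab in simp)
    then show False using Ab A0 by simp
  qed
  have ub: "u b > 0"
  proof -
    have "b * u b - f b = R * s b" using Ab(1) s_pos[of b] unfolding A_def by (simp add: field_simps)
    moreover have "R * s b > 0" using R s_pos[of b] by simp
    ultimately have "b * u b > 0" using fpos[of b] by linarith
    then show ?thesis using b0 by (simp add: zero_less_mult_iff)
  qed
  have cu: "isCont u b" using ud by (rule DERIV_isCont)
  have cs: "isCont s b" using s_deriv by (rule DERIV_isCont)
  have cN: "isCont N b" using N_deriv by (rule DERIV_isCont)
  have c1: "((\<lambda>t. u t / (2 * s t) * N t) \<longlongrightarrow> u b / (2 * s b) * N b) (at_left b)"
    by (intro isCont_left continuous_intros cu cs cN) (use s_pos[of b] in simp)
  have c1pos: "u b / (2 * s b) * N b > 0" using ub s_pos[of b] N_pos[of b] by simp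
  have c2: "((\<lambda>t. R - A t) \<longlongrightarrow> 0) (at_left b)"
    using isCont_left[OF continuous_diff[OF continuous_const A_cont, of b R]] Ab by simp
  have evb: "eventually (\<lambda>t. t \<in> {0<..<b}) (at_left b)" by (rule eventually_at_left_real[OF b0])
  have evg: "eventually (\<lambda>t. 0 < R - A t) (at_left b)"
    using evb by eventually_elim (use left in auto)
  have "filterlim (\<lambda>t. inverse (R - A t)) at_top (at_left b)"
    by (rule filterlim_inverse_at_top[OF c2 evg])
  then have "filterlim (\<lambda>t. (u t / (2 * s t) * N t) * inverse (R - A t)) at_top (at_left b)"
    by (rule filterlim_tendsto_pos_mult_at_top[OF c1 c1pos])
  then have L: "filterlim (\<lambda>t. t + (u t / (2 * s t) * N t) * inverse (R - A t)) at_top (at_left b)"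
    by (rule filterlim_tendsto_add_at_top[OF tendsto_ident_at])
  have E: "X = (\<lambda>t. t + (u t / (2 * s t) * N t) * inverse (R - A t))"
    by (rule ext) (simp only: X_def divide_inverse mult.assoc)
  have "filterlim X at_top (at_left b)" unfolding E by (rule L)
  then have "eventually (\<lambda>t. y \<le> X t) (at_left b)" unfolding filterlim_at_top by blast
  then have "eventually (\<lambda>t. y \<le> X t \<and> t \<in> {0<..<b}) (at_left b)"
    using evb by eventually_elim auto
  then obtain t where "y \<le> X t" "t \<in> {0<..<b}"
    using eventually_happens[of _ "at_left b"] trivial_limit_at_left_real by blast
  then show ?thesis using left[of t] by auto
qed

lemma refl_setup: "thmctx R (\<lambda>t. f (-t)) (\<lambda>t. - u (-t)) (\<lambda>t. k (-t))"
proof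
  fix t
  show "((\<lambda>t. f (-t)) has_real_derivative - u (-t)) (at t)"
    using DERIV_mirror[of f "u (-t)" t] fd[of "-t"] by simp
  have "((\<lambda>t. u (-t)) has_real_derivative - k (-t)) (at t)"
    using DERIV_mirror[of u "k (-t)" t] ud[of "-t"] by simp
  then show "((\<lambda>t. - u (-t)) has_real_derivative k (-t)) (at t)"
    using DERIV_minus by fastforce
  show "k (-t) \<ge> 0" by (rule kpos)
  show "t\<^sup>2 + (f (-t))\<^sup>2 > R\<^sup>2" using big[of "-t"] by simp
qed (use R fpos in auto)

lemma lower: "\<exists>t. A t < R \<and> X t \<le> y"
proof -
  interpret r: thmctx R "\<lambda>t. f (-t)" "\<lambda>t. - u (-t)" "\<lambda>t. k (-t)" by (rule refl_setup)
  obtain t where t: "r.A t < R" "r.X t \<ge> -y" using r.upper by blast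
  have sA: "r.s t = s (-t)" by (simp add: r.s_def s_def)
  have eA: "r.A t = A (-t)" by (simp add: r.A_def A_def sA)
  have eN: "r.N t = N (-t)" by (simp add: r.N_def N_def)
  have "r.X t = - X (-t)" by (simp add: r.X_def X_def sA eA eN)
  then show ?thesis using t eA by (intro exI[of _ "-t"]) auto
qed

lemma D_between:
  assumes "A a < R" "A c < R" "a \<le> x" "x \<le> c"
  shows "A x < R"
proof (cases "a = x")
  case True
  then show ?thesis using assms(1) by simp
next
  case F1: False
  show ?thesis
  proof (cases "x = c")
    case True
    then show ?thesis using assms(2) by simp
  next
    case False
    have "a < x" using F1 assms(3) by linarith
    moreover have "x < c" using False assms(4) by linarith
    ultimately show ?thesis using A_interval[of a x c] assms(1,2) by blast
  qed
qed

lemma X_cont_on: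
  assumes "A a < R" "A c < R"
  shows "continuous_on {a..c} X"
proof (intro continuous_at_imp_continuous_on ballI)
  fix x assume "x \<in> {a..c}"
  then have "A x < R" using D_between[OF assms, of x] by simp
  then show "isCont X x" by (rule DERIV_isCont[OF X_deriv])
qed

lemma X_strict: "A a < R \<Longrightarrow> A c < R \<Longrightarrow> a < c \<Longrightarrow> X a < X c"
  by (rule DERIV_pos_imp_increasing[where f=X]) (use X_deriv X_deriv_pos D_between in blast)+

lemma X_bij: "bij_betw X {t. A t < R} UNIV"
  unfolding bij_betw_def
proof
  show "inj_on X {t. A t < R}"
  proof (rule inj_onI)
    fix a c assume "a \<in> {t. A t < R}" "c \<in> {t. A t < R}" "X a = X c"
    then show "a = c" using X_strict[of a c] X_strict[of c a] by (cases a c rule: linorder_cases) auto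
  qed
  have "y \<in> X ` {t. A t < R}" for y
  proof -
    obtain t1 where t1: "A t1 < R" "X t1 \<le> y" using lower by blast
    obtain t2 where t2: "A t2 < R" "X t2 \<ge> y" using upper by blast
    show ?thesis
    proof (cases "t1 \<le> t2")
      case True
      then obtain x where "t1 \<le> x" "x \<le> t2" "X x = y"
        using IVT'[of X t1 y t2] X_cont_on[OF t1(1) t2(1)] t1 t2 by blast
      moreover have "A x < R" using D_between[of t1 t2 x] t1 t2 calculation by blast
      ultimately show ?thesis by blast
    next
      case False
      then obtain x where "t2 \<le> x" "x \<le> t1" "X x = y"
        using IVT2'[of X t1 y t2] X_cont_on[OF t2(1) t1(1)] t1 t2 by force
      moreover have "A x < R" using D_between[of t2 t1 x] t1 t2 calculation by blast
      ultimately show ?thesis by blast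
    qed
  qed
  then show "X ` {t. A t < R} = UNIV" by blast
qed

end

lemma convex_deriv_mono:
  fixes f :: "real \<Rightarrow> real"
  assumes "convex_on UNIV f" "\<And>t. (f has_real_derivative u t) (at t)" "a \<le> b"
  shows "u a \<le> u b"
proof -
  have 1: "f b - f a \<ge> u a * (b - a)"
    by (rule convex_on_imp_above_tangent[OF assms(1)]) (use assms(2) in auto)
  have 2: "f a - f b \<ge> u b * (a - b)"
    by (rule convex_on_imp_above_tangent[OF assms(1)]) (use assms(2) in auto)
  have "(u b - u a) * (b - a) \<ge> 0" using 1 2 by (simp add: algebra_simps)
  then show ?thesis using assms(3) by (cases "a = b") (auto simp: zero_le_mult_iff)
qed

lemma deriv_nonneg_of_mono:
  fixes u :: "real \<Rightarrow> real"
  assumes "(u has_real_derivative k) (at t)" "\<And>a b. a \<le> b \<Longrightarrow> u a \<le> u b"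
  shows "k \<ge> 0"
proof (rule ccontr)
  assume "\<not> k \<ge> 0"
  then obtain d where "d > 0" "\<And>h. h > 0 \<Longrightarrow> h < d \<Longrightarrow> u t > u (t + h)"
    using DERIV_neg_dec_right[OF assms(1)] by force
  then have "u t > u (t + d/2)" by simp
  moreover have "u t \<le> u (t + d/2)" using assms(2) \<open>d > 0\<close> by simp
  ultimately show False by simp
qed

theorem theorem7:
  fixes R :: real and f :: "real \<Rightarrow> real"
  assumes "R > 0"
    and "\<And>t. f t > 0"
    and "f differentiable_on UNIV"
    and "deriv f differentiable_on UNIV"
    and "continuous_on UNIV (deriv (deriv f))"
    and "convex_on UNIV f"
    and "\<And>t. t\<^sup>2 + (f t)\<^sup>2 > R\<^sup>2"
  shows "bij_betw (x_fn R f) {t. alpha_fn f t < R} UNIV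
         \<and> (\<forall>t \<in> {t. alpha_fn f t < R}.
              x_fn R f differentiable (at t) \<and> deriv (x_fn R f) t \<noteq> 0)"
proof -
  have fd: "(f has_real_derivative deriv f t) (at t)" for t
    using assms(3) DERIV_deriv_iff_real_differentiable differentiable_on_def by blast
  have ud: "(deriv f has_real_derivative deriv (deriv f) t) (at t)" for t
    using assms(4) DERIV_deriv_iff_real_differentiable differentiable_on_def by blast
  have kpos: "deriv (deriv f) t \<ge> 0" for t
    by (rule deriv_nonneg_of_mono[OF ud]) (rule convex_deriv_mono[OF assms(6) fd])
  interpret S: thmctx R f "deriv f" "deriv (deriv f)"
    by unfold_locales (use assms fd ud kpos in auto)
  have eA: "alpha_fn f = S.A" by (rule ext) (simp add: alpha_fn_def S.A_def S.s_def)
  have eX: "x_fn R f = S.X" by (rule ext) (simp add: x_fn_def S.X_def S.s_def S.N_def eA)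
  show ?thesis unfolding eA eX
  proof (intro conjI ballI S.X_bij)
    fix t assume "t \<in> {t. S.A t < R}"
    then have t: "S.A t < R" by simp
    show "S.X differentiable (at t)" using S.X_deriv[OF t] real_differentiable_def by blast
    show "deriv S.X t \<noteq> 0" using DERIV_imp_deriv[OF S.X_deriv[OF t]] S.X_deriv_pos[OF t] by linarith
  qed
qed

end
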